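(* Let $n\in\mathbb N^+$. For every $N\in\mathbb N^+$, no solution $k$ of $$-\frac{1}{2^{n+1}-1}\tan\Big(\frac k2\Big)=\tan(Nk),\qquad k\in(0,\pi),$$ lies in $\pi\mathbb Q$. *)

theory Defs
  imports "HOL-Analysis.Analysis"
begin

end

theory Submission imports Defs "Jordan_Normal_Form.Determinant" "HOL-Library.Z2"
begin

definition Rg :: "complex \<Rightarrow> nat \<Rightarrow> complex set" where
  "Rg w D = {x. \<exists>c::nat\<Rightarrow>int. x = (\<Sum>l<D. of_int (c l) * w^l)}"

lemma RgI: "x = (\<Sum>l<D. of_int (c l) * w^l) \<Longrightarrow> x \<in> Rg w D"
  unfolding Rg_def by blast

lemma Rg_add: "x \<in> Rg w D \<Longrightarrow> y \<in> Rg w D \<Longrightarrow> x + y \<in> Rg w D"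
proof -
  assume "x \<in> Rg w D" "y \<in> Rg w D"
  then obtain c d where "x = (\<Sum>l<D. of_int (c l) * w^l)" "y = (\<Sum>l<D. of_int (d l) * w^l)"
    unfolding Rg_def by auto
  then have h: "x + y = (\<Sum>l<D. of_int (c l + d l) * w^l)"
    by (simp add: sum.distrib algebra_simps)
  show ?thesis by (rule RgI[where c = "\<lambda>l. c l + d l", OF h])
qed

lemma Rg_smult: "x \<in> Rg w D \<Longrightarrow> of_int z * x \<in> Rg w D"
proof -
  assume "x \<in> Rg w D"
  then obtain c where "x = (\<Sum>l<D. of_int (c l) * w^l)"
    unfolding Rg_def by auto
  then have h: "of_int z * x = (\<Sum>l<D. of_int (z * c l) * w^l)"
    by (simp add: sum_distrib_left mult.assoc)
  show ?thesis by (rule RgI[where c = "\<lambda>l. z * c l", OF h])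
qed

lemma Rg_zero: "0 \<in> Rg w D"
  unfolding Rg_def by (rule CollectI, rule exI[of _ "\<lambda>_. 0"], simp)

lemma Rg_sum: "finite S \<Longrightarrow> (\<And>i. i \<in> S \<Longrightarrow> f i \<in> Rg w D) \<Longrightarrow> sum f S \<in> Rg w D"
  by (induction S rule: finite_induct) (auto intro: Rg_add Rg_zero)

lemma Rg_pow: assumes "w ^ D = 1" "D > 0" shows "w ^ j \<in> Rg w D"
proof -
  have "w ^ j = w ^ (j mod D)"
  proof -
    have "w ^ j = w ^ (D * (j div D) + j mod D)" by simp
    also have "\<dots> = (w ^ D) ^ (j div D) * w ^ (j mod D)" by (simp only: power_add power_mult)
    finally show ?thesis using assms by simp
  qed
  also have "\<dots> = (\<Sum>l<D. if l = j mod D then w^l else 0)"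
    using assms(2) by (simp add: sum.delta)
  also have "\<dots> = (\<Sum>l<D. of_int (if l = j mod D then 1 else 0) * w^l)"
    by (rule sum.cong) auto
  finally show ?thesis by (rule RgI[where c = "\<lambda>l. if l = j mod D then 1 else 0"])
qed

lemma Rg_mult: assumes "w ^ D = 1" "D > 0" "x \<in> Rg w D" "y \<in> Rg w D" shows "x * y \<in> Rg w D"
proof -
  obtain c where c: "x = (\<Sum>l<D. of_int (c l) * w^l)" using assms(3) unfolding Rg_def by auto
  obtain d where d: "y = (\<Sum>l<D. of_int (d l) * w^l)" using assms(4) unfolding Rg_def by auto
  have "x * y = (\<Sum>l<D. \<Sum>m<D. of_int (c l * d m) * w^(l+m))"
    unfolding c d by (simp add: sum_product algebra_simps power_add)
  also have "\<dots> \<in> Rg w D"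
    by (intro Rg_sum finite_lessThan Rg_smult Rg_pow assms(1,2))
  finally show ?thesis .
qed

lemma Rg_uminus: "x \<in> Rg w D \<Longrightarrow> - x \<in> Rg w D"
  using Rg_smult[of x w D "-1"] by simp

lemma Rg_diff: "x \<in> Rg w D \<Longrightarrow> y \<in> Rg w D \<Longrightarrow> x - y \<in> Rg w D"
  using Rg_add[of x w D "-y"] Rg_uminus by simp

lemma Rg_int: assumes "w ^ D = 1" "D > 0" shows "of_int z \<in> Rg w D"
  using Rg_smult[OF Rg_pow[OF assms, of 0], of z] by simp

lemma bit2: "(of_int (2 * x - (if b then 1 else 0)) :: bit) = (if b then 1 else 0)"
  by (cases b) (simp_all add: of_int_diff)

lemma half_notin_Rg: assumes "w ^ D = 1" "D > 0" shows "1/2 \<notin> Rg w D"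
proof
  assume h: "1/2 \<in> Rg w D"
  have "\<forall>i. \<exists>c::nat\<Rightarrow>int. w^i / 2 = (\<Sum>l<D. of_int (c l) * w^l)"
  proof
    fix i
    have "w^i * (1/2) \<in> Rg w D" by (rule Rg_mult[OF assms Rg_pow[OF assms] h])
    then show "\<exists>c::nat\<Rightarrow>int. w^i / 2 = (\<Sum>l<D. of_int (c l) * w^l)" unfolding Rg_def by simp
  qed
  then obtain c :: "nat \<Rightarrow> nat \<Rightarrow> int" where c: "\<And>i. w^i / 2 = (\<Sum>l<D. of_int (c i l) * w^l)"
    by metis
  define Bz :: "int mat" where "Bz = mat D D (\<lambda>(i,l). 2 * c i l - (if i = l then 1 else 0))"
  define e :: "complex vec" where "e = vec D (\<lambda>l. w^l)"
  have Bc: "Bz \<in> carrier_mat D D" unfolding Bz_def by simp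
  have MBc: "map_mat of_int Bz \<in> carrier_mat D D" unfolding Bz_def by simp
  have ec: "e \<in> carrier_vec D" unfolding e_def by simp
  have e0: "e \<noteq> 0\<^sub>v D"
  proof
    assume "e = 0\<^sub>v D"
    then have "e $ 0 = 0" using assms(2) by simp
    then show False unfolding e_def using assms(2) by simp
  qed
  have prod0: "map_mat of_int Bz *\<^sub>v e = 0\<^sub>v D"
  proof (rule eq_vecI)
    fix i assume i: "i < dim_vec (0\<^sub>v D :: complex vec)"
    then have iD: "i < D" by simp
    have "(map_mat of_int Bz *\<^sub>v e) $ i = (\<Sum>l<D. (2 * of_int (c i l) - (if i = l then 1 else 0)) * w^l)"
      using iD unfolding Bz_def e_def by (auto simp: scalar_prod_def row_def atLeast0LessThan intro!: sum.cong)
    also have "\<dots> = 2 * (\<Sum>l<D. of_int (c i l) * w^l) - (\<Sum>l<D. (if i = l then 1 else 0) * w^l)"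
      by (simp add: sum_subtractf sum_distrib_left algebra_simps)
    also have "(\<Sum>l<D. (if i = l then 1 else 0) * w^l) = (\<Sum>l<D. if i = l then w^l else 0)"
      by (rule sum.cong) auto
    also have "\<dots> = w^i" using iD by (simp add: sum.delta)
    also have "2 * (\<Sum>l<D. of_int (c i l) * w^l) - w^i = 0" by (simp add: c[symmetric])
    finally show "(map_mat of_int Bz *\<^sub>v e) $ i = (0\<^sub>v D) $ i" using iD by simp
  qed (simp add: Bz_def)
  have "det (map_mat (of_int :: int \<Rightarrow> complex) Bz) = 0"
    unfolding det_0_iff_vec_prod_zero[OF MBc] using ec e0 prod0 by (intro exI[of _ e] conjI)
  moreover have "det (map_mat (of_int :: int \<Rightarrow> complex) Bz) = of_int (det Bz)"
    by (rule of_int_hom.hom_det)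
  ultimately have dB: "det Bz = 0" by simp
  have "map_mat (of_int :: int \<Rightarrow> bit) Bz = 1\<^sub>m D"
  proof (rule eq_matI)
    fix i j assume "i < dim_row (1\<^sub>m D :: bit mat)" "j < dim_col (1\<^sub>m D :: bit mat)"
    then show "map_mat (of_int :: int \<Rightarrow> bit) Bz $$ (i, j) = 1\<^sub>m D $$ (i, j)"
      unfolding Bz_def by (simp add: bit2)
  qed (simp_all add: Bz_def)
  then have d1: "det (map_mat (of_int :: int \<Rightarrow> bit) Bz) = 1" by (simp only: det_one)
  have "det (map_mat (of_int :: int \<Rightarrow> bit) Bz) = of_int (det Bz)"
    by (rule of_int_hom.hom_det)
  with d1 have "(of_int (det Bz) :: bit) = 1" by simp
  with dB show False by simp
qed


definition ev2 :: "complex \<Rightarrow> nat \<Rightarrow> complex \<Rightarrow> bool" where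
  "ev2 w D x \<longleftrightarrow> (\<exists>y\<in>Rg w D. x = 2 * y)"

lemma ev2_odd: assumes "w ^ D = 1" "D > 0" "odd r" shows "\<not> ev2 w D (of_int r)"
proof
  assume "ev2 w D (of_int r)"
  then obtain y where y: "y \<in> Rg w D" "of_int r = 2 * y" unfolding ev2_def by auto
  have "of_int ((r + 1) div 2) - y \<in> Rg w D" by (intro Rg_diff Rg_int assms(1,2) y(1))
  moreover have "(of_int ((r + 1) div 2) :: complex) = (of_int r + 1) / 2"
  proof -
    have "r + 1 = 2 * ((r + 1) div 2)" using assms(3) by presburger
    then have "(of_int (r + 1) :: complex) = 2 * of_int ((r + 1) div 2)"
      by (metis of_int_mult of_int_numeral)
    then show ?thesis by simp
  qed
  ultimately have "(of_int r + 1) / 2 - y \<in> Rg w D" by simp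
  moreover have "(of_int r + 1) / 2 - y = 1/2" using y(2) by (simp add: field_simps)
  ultimately show False using half_notin_Rg[OF assms(1,2)] by simp
qed

lemma ev2_mult: assumes "w ^ D = 1" "D > 0" "ev2 w D x" "y \<in> Rg w D" shows "ev2 w D (x * y)"
proof -
  obtain z where z: "z \<in> Rg w D" "x = 2 * z" using assms(3) unfolding ev2_def by auto
  have "z * y \<in> Rg w D" by (rule Rg_mult[OF assms(1,2) z(1) assms(4)])
  moreover have "x * y = 2 * (z * y)" using z(2) by simp
  ultimately show ?thesis unfolding ev2_def by blast
qed

lemma ev2_add: assumes "ev2 w D x" "ev2 w D y" shows "ev2 w D (x + y)"
proof -
  obtain z where z: "z \<in> Rg w D" "x = 2 * z" using assms(1) unfolding ev2_def by auto
  obtain z' where z': "z' \<in> Rg w D" "y = 2 * z'" using assms(2) unfolding ev2_def by auto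
  have "z + z' \<in> Rg w D" by (rule Rg_add[OF z(1) z'(1)])
  moreover have "x + y = 2 * (z + z')" using z(2) z'(2) by simp
  ultimately show ?thesis unfolding ev2_def by blast
qed

lemma ev2_uminus: assumes "ev2 w D x" shows "ev2 w D (- x)"
proof -
  obtain z where z: "z \<in> Rg w D" "x = 2 * z" using assms(1) unfolding ev2_def by auto
  have "- z \<in> Rg w D" by (rule Rg_uminus[OF z(1)])
  moreover have "- x = 2 * (- z)" using z(2) by simp
  ultimately show ?thesis unfolding ev2_def by blast
qed

lemma ev2_diff: "ev2 w D x \<Longrightarrow> ev2 w D y \<Longrightarrow> ev2 w D (x - y)"
  using ev2_add[of w D x "- y"] ev2_uminus[of w D y] by simp

lemma ev2_two: "y \<in> Rg w D \<Longrightarrow> ev2 w D (2 * y)"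
  unfolding ev2_def by blast

lemma ev2_sum: "finite S \<Longrightarrow> (\<And>i. i \<in> S \<Longrightarrow> ev2 w D (f i)) \<Longrightarrow> ev2 w D (sum f S)"
proof (induction S rule: finite_induct)
  case empty
  then show ?case using ev2_two[OF Rg_zero, of w D] by simp
next
  case (insert x F)
  then show ?case by (simp add: ev2_add)
qed

lemma Rg_power: assumes "w ^ D = 1" "D > 0" "z \<in> Rg w D" shows "z ^ j \<in> Rg w D"
proof (induction j)
  case 0
  then show ?case using Rg_pow[OF assms(1,2), of 0] by simp
next
  case (Suc j)
  then show ?case using Rg_mult[OF assms(1,2) assms(3) Suc] by simp
qed

lemma ev2_pow1: assumes "w ^ D = 1" "D > 0" "z \<in> Rg w D" "ev2 w D (z - 1)"
  shows "ev2 w D (z ^ j - 1)"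
proof (induction j)
  case 0
  then show ?case using ev2_two[OF Rg_zero, of w D] by simp
next
  case (Suc j)
  have "z ^ Suc j - 1 = (z ^ j - 1) * z + (z - 1)" by (simp add: algebra_simps)
  moreover have "ev2 w D ((z ^ j - 1) * z)" by (rule ev2_mult[OF assms(1,2) Suc assms(3)])
  ultimately show ?case using ev2_add assms(4) by metis
qed

lemma ev2_odd_order: assumes "w ^ D = 1" "D > 0" "z \<in> Rg w D" "ev2 w D (z - 1)"
  "z ^ e = 1" "odd e" shows "z = 1"
proof (rule ccontr)
  assume nz: "z \<noteq> 1"
  have "(\<Sum>i<e. z^i) = 0" using sum_gp_strict[of z e] nz assms(5) by simp
  moreover have "(\<Sum>i<e. z^i) = of_nat e + (\<Sum>i<e. z^i - 1)" by (simp add: sum_subtractf)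
  ultimately have "of_nat e = - (\<Sum>i<e. z^i - 1)" by (simp add: eq_neg_iff_add_eq_0 add.commute)
  moreover have "ev2 w D (- (\<Sum>i<e. z^i - 1))"
    by (intro ev2_uminus ev2_sum finite_lessThan ev2_pow1[OF assms(1-4)])
  ultimately have "ev2 w D (of_int (int e))" by simp
  moreover have "odd (int e)" using assms(6) by simp
  ultimately show False using ev2_odd[OF assms(1,2)] by blast
qed

lemma ev2_four: assumes "w ^ D = 1" "D > 0" "z \<in> Rg w D" "ev2 w D (z - 1)" "z ^ 4 = 1"
  shows "z ^ 2 = 1"
proof (rule ccontr)
  assume nz: "z ^ 2 \<noteq> 1"
  have "(z^2 - 1) * (z^2 + 1) = 0" using assms(5) by (simp add: algebra_simps flip: power_add)
  then have z2: "z ^ 2 = -1" using nz by (simp add: eq_neg_iff_add_eq_0)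
  obtain y where y: "y \<in> Rg w D" "z - 1 = 2 * y" using assms(4) unfolding ev2_def by auto
  have "(2 * y)^2 = (z - 1)^2" using y(2) by simp
  also have "\<dots> = z^2 - 2 * z + 1" by (simp add: power2_eq_square algebra_simps)
  also have "\<dots> = - 2 * z" using z2 by simp
  finally have "z = - 2 * y^2" by (simp add: power2_eq_square)
  then have "1 = 2 * (y^2 * z)" using z2 by (simp add: power2_eq_square algebra_simps)
  moreover have "y^2 * z \<in> Rg w D" by (intro Rg_mult Rg_power assms(1-3) y(1))
  ultimately have "ev2 w D (of_int 1)" unfolding ev2_def by auto
  then show False using ev2_odd[OF assms(1,2), of 1] by simp
qed

lemma ev2_twopow: assumes "w ^ D = 1" "D > 0" "z \<in> Rg w D" "ev2 w D (z - 1)"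
  shows "z ^ (2 ^ s) = 1 \<Longrightarrow> z ^ 2 = 1"
proof (induction s)
  case 0
  then show ?case by simp
next
  case (Suc s)
  show ?case
  proof (cases s)
    case 0
    then show ?thesis using Suc.prems by simp
  next
    case (Suc s')
    let ?t = "z ^ (2 ^ s')"
    have "?t ^ 4 = z ^ (2 ^ Suc s)" using Suc
      by (simp flip: power_mult) (simp add: algebra_simps)
    moreover have "?t ^ 2 = z ^ (2 ^ s)" using Suc by (simp add: mult.commute flip: power_mult)
    moreover have "?t \<in> Rg w D" by (rule Rg_power[OF assms(1-3)])
    moreover have "ev2 w D (?t - 1)" by (rule ev2_pow1[OF assms])
    ultimately have "z ^ (2 ^ s) = 1" using ev2_four[OF assms(1,2), of ?t] \<open>z ^ (2 ^ Suc s) = 1\<close>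
      by simp
    then show ?thesis using Suc.IH by simp
  qed
qed

lemma two_odd_decomp: "(m::nat) > 0 \<Longrightarrow> \<exists>t e. m = 2 ^ t * e \<and> odd e"
proof (induction m rule: less_induct)
  case (less m)
  show ?case
  proof (cases "even m")
    case True
    then obtain m' where m': "m = 2 * m'" by blast
    then have "m' < m" "m' > 0" using less.prems by auto
    then obtain t e where "m' = 2 ^ t * e" "odd e" using less.IH by blast
    then have "m = 2 ^ Suc t * e" using m' by simp
    then show ?thesis using \<open>odd e\<close> by blast
  next
    case False
    then show ?thesis by (intro exI[of _ 0] exI[of _ m]) simp
  qed
qed

lemma ev2_root: assumes "w ^ D = 1" "D > 0" "z \<in> Rg w D" "ev2 w D (z - 1)" "z ^ D = 1"
  shows "z ^ 2 = 1"
proof -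
  obtain t e where te: "D = 2 ^ t * e" "odd e" using two_odd_decomp[OF assms(2)] by blast
  let ?h = "z ^ (2 ^ t)"
  have "?h ^ e = 1" using assms(5) te(1) by (simp flip: power_mult)
  then have "?h = 1"
    by (intro ev2_odd_order[OF assms(1,2) Rg_power[OF assms(1-3)] ev2_pow1[OF assms(1-4)] _ te(2)])
  then show ?thesis by (rule ev2_twopow[OF assms(1-4)])
qed


lemma cis_double_minus_one: "cis (2 * x) - 1 = 2 * \<i> * cis x * complex_of_real (sin x)"
proof -
  have "sin (2 * x) = 2 * sin x * cos x" "cos (2 * x) = 1 - 2 * (sin x)^2"
    by (simp_all add: sin_double cos_double_sin)
  then show ?thesis by (simp add: complex_eq_iff power2_eq_square algebra_simps)
qed

lemma ev2_cancel_odd: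
  assumes "w ^ D = 1" "D \<ge> 2" "ev2 w D (of_int r * (w^2 * x))" "odd r" "x \<in> Rg w D"
  shows "ev2 w D x"
proof -
  have D0: "D > 0" using assms(2) by simp
  obtain r' where r': "r = 2 * r' + 1" using assms(4) by (metis oddE)
  have "w^2 * x = of_int r * (w^2 * x) - 2 * (of_int r' * (w^2 * x))" using r' by (simp add: algebra_simps)
  moreover have "of_int r' * (w^2 * x) \<in> Rg w D"
    by (intro Rg_smult Rg_mult[OF assms(1) D0] Rg_pow[OF assms(1) D0] assms(5))
  ultimately have e1: "ev2 w D (w^2 * x)" using ev2_diff[OF assms(3) ev2_two] by metis
  have "w ^ (D - 2) * w^2 = w ^ (D - 2 + 2)" by (simp only: power_add)
  also have "D - 2 + 2 = D" using assms(2) by simp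
  finally have "w ^ (D - 2) * w^2 = w ^ D" .
  then have "w ^ (D - 2) * (w^2 * x) = w ^ D * x" by (metis mult.assoc)
  then have "x = w ^ (D - 2) * (w^2 * x)" using assms(1) by simp
  moreover have "ev2 w D ((w^2 * x) * w ^ (D - 2))"
    by (rule ev2_mult[OF assms(1) D0 e1 Rg_pow[OF assms(1) D0]])
  ultimately show ?thesis by (metis mult.commute)
qed

theorem lemma23:
  fixes n N :: nat and k :: real
  assumes "n \<ge> 1" and "N \<ge> 1"
    and "0 < k" and "k < pi"
    and "- (1 / (2 ^ (n + 1) - 1)) * tan (k / 2) = tan (real N * k)"
  shows "k / pi \<notin> \<rat>"
proof
  assume "k / pi \<in> \<rat>"
  then obtain a b :: int where ab: "b > 0" "k / pi = of_int a / of_int b" by (metis Rats_cases')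
  define t where "t = k / 2"
  define th where "th = real N * k"
  define m :: real where "m = 2 ^ (n + 1) - 1"
  define A :: real where "A = 2 ^ n"
  define B :: real where "B = 2 ^ n - 1"
  have m1: "m \<ge> 1" unfolding m_def using one_le_power[of "2::real" "n+1"] by simp
  have ABm: "A + B = m" "A - B = 1" unfolding A_def B_def m_def by simp_all
  have t0: "0 < t" "t < pi / 2" unfolding t_def using assms(3,4) by auto
  have tant: "tan t > 0" by (rule tan_gt_zero[OF t0])
  have cost: "cos t > 0" using t0 by (intro cos_gt_zero) auto
  have eq: "- (1 / m) * tan t = tan th" using assms(5) unfolding m_def t_def th_def by simp
  have "tan th \<noteq> 0" unfolding eq[symmetric] using tant m1 by simp
  then have costh: "cos th \<noteq> 0" unfolding tan_def by auto
  have eq2: "- sin t * cos th = m * (sin th * cos t)"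
    using eq cost costh m1 unfolding tan_def by (simp add: field_simps)
  have real_eq: "A * sin (th + t) + B * sin (th - t) = 0"
  proof -
    have "A * sin (th + t) + B * sin (th - t) = (A + B) * (sin th * cos t) + (A - B) * (cos th * sin t)"
      by (simp add: sin_add sin_diff algebra_simps)
    also have "\<dots> = 0" using ABm eq2 by (simp add: algebra_simps)
    finally show ?thesis .
  qed
  define w where "w = cis t"
  define D where "D = nat (4 * b)"
  have D4: "D \<ge> 4" unfolding D_def using ab(1) by simp
  have D0: "D > 0" using D4 by simp
  have wD: "w ^ D = 1"
  proof -
    have "k = pi * of_int a / of_int b" using ab by (simp add: field_simps)
    then have "real D * t = 2 * pi * of_int a" unfolding D_def t_def using ab(1) by (simp add: field_simps)
    then show ?thesis unfolding w_def Complex.DeMoivre by simp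
  qed
  have wpow: "w ^ j = cis (real j * t)" for j unfolding w_def by (rule Complex.DeMoivre)
  define v where "v = w ^ (4 * N - 2)"
  have th2: "th = real (2 * N) * t" unfolding th_def t_def by simp
  have c1: "w ^ (4 * N + 2) - 1 = 2 * \<i> * cis (th + t) * complex_of_real (sin (th + t))"
  proof -
    have "w ^ (4 * N + 2) = cis (2 * (th + t))" unfolding wpow th2 by (simp add: algebra_simps)
    then show ?thesis by (simp only: cis_double_minus_one)
  qed
  have c2: "w ^ 2 * (v - 1) = 2 * \<i> * cis (th + t) * complex_of_real (sin (th - t))"
  proof -
    have "v = cis (2 * (th - t))" unfolding v_def wpow th2 using assms(2)
      by (simp add: of_nat_diff algebra_simps)
    then have "v - 1 = 2 * \<i> * cis (th - t) * complex_of_real (sin (th - t))"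
      by (simp only: cis_double_minus_one)
    moreover have "w ^ 2 * cis (th - t) = cis (th + t)" unfolding wpow by (simp add: cis_mult add.commute)
    ultimately show ?thesis by (simp add: algebra_simps)
  qed
  have E: "2 ^ n * (w ^ (4 * N + 2) - 1) + (2 ^ n - 1) * (w ^ 2 * (v - 1)) = 0"
  proof -
    have "2 ^ n * (w ^ (4 * N + 2) - 1) + (2 ^ n - 1) * (w ^ 2 * (v - 1))
       = 2 * \<i> * cis (th + t) * complex_of_real (A * sin (th + t) + B * sin (th - t))"
      unfolding c1 c2 A_def B_def by (simp add: algebra_simps)
    then show ?thesis using real_eq by simp
  qed
  have w4v: "w ^ (4 * N + 2) = v * w ^ 4" unfolding v_def using assms(2)
    by (simp flip: power_add)
  obtain n' where n': "n = Suc n'" using assms(1) by (cases n) auto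
  have RgW: "w ^ j \<in> Rg w D" for j by (rule Rg_pow[OF wD D0])
  have Rv: "v \<in> Rg w D" unfolding v_def by (rule RgW)
  have odd_B: "odd ((2::int) ^ n - 1)" using n' by simp
  have ev_v: "ev2 w D (v - 1)"
  proof (rule ev2_cancel_odd[OF wD _ _ odd_B])
    show "2 \<le> D" using D4 by simp
    show "v - 1 \<in> Rg w D" by (intro Rg_diff Rv Rg_int[OF wD D0, of 1, simplified])
    have "of_int (2 ^ n - 1) * (w ^ 2 * (v - 1)) = 2 * (- (2 ^ n' * (v * w ^ 4 - 1)))"
      using E unfolding w4v n' by (simp add: algebra_simps eq_neg_iff_add_eq_0)
    moreover have "- (2 ^ n' * (v * w ^ 4 - 1)) \<in> Rg w D"
      using Rg_uminus Rg_smult[of "v * w ^ 4 - 1" w D "2 ^ n'"]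
        Rg_diff Rg_mult[OF wD D0 Rv RgW[of 4]] Rg_int[OF wD D0, of 1] by simp
    ultimately show "ev2 w D (of_int (2 ^ n - 1) * (w ^ 2 * (v - 1)))"
      using ev2_two by metis
  qed
  have "v ^ D = 1" unfolding v_def using wD by (metis power_mult mult.commute power_one)
  then have "v ^ 2 = 1" by (rule ev2_root[OF wD D0 Rv ev_v])
  then have "(v - 1) * (v + 1) = 0" by (simp add: algebra_simps power2_eq_square)
  then have "v = 1 \<or> v = -1" by (auto simp: eq_neg_iff_add_eq_0)
  then show False
  proof
    assume v1: "v = 1"
    then have "w ^ 4 = 1" using E w4v by simp
    then have "cis (2 * k) = 1" unfolding wpow t_def by simp
    then have "cos (2 * k) = 1" by (metis cis.sel(1) one_complex.sel(1))
    then have "sin k = 0" by (simp add: cos_double_sin)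
    moreover have "sin k > 0" using assms(3,4) by (rule sin_gt_zero)
    ultimately show False by simp
  next
    assume vm: "v = -1"
    have E2: "2 ^ n * (w ^ 4 + 1) + 2 * (2 ^ n - 1) * w ^ 2 = 0"
      using E unfolding w4v vm by (simp add: algebra_simps eq_neg_iff_add_eq_0)
    show False
    proof (cases n')
      case 0
      with n' have "2 * (w ^ 4 + 1) + 2 * w ^ 2 = 0" using E2 by simp
      moreover have "(w^2)^2 = w^4" by (simp flip: power_mult)
      ultimately have "2 * ((w^2)^2 + w^2 + 1) = 0" by (simp add: algebra_simps)
      then have q: "(w^2)^2 + w^2 + 1 = 0" by (metis mult_eq_0_iff zero_neq_numeral)
      have u3: "(w^2)^3 = 1"
      proof -
        have "(w^2)^3 - 1 = (w^2 - 1) * ((w^2)^2 + w^2 + 1)" by (simp add: algebra_simps power2_eq_square power3_eq_cube)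
        then show ?thesis using q by simp
      qed
      have "(w^2) ^ (2 * N - 1) = w ^ (2 * (2 * N - 1))" by (simp only: power_mult)
      moreover have "2 * (2 * N - 1) = 4 * N - 2" by simp
      ultimately have "v = (w^2) ^ (2 * N - 1)" unfolding v_def by simp
      then have "v ^ 3 = ((w^2)^3) ^ (2 * N - 1)" by (simp flip: power_mult add: mult.commute)
      then have "v ^ 3 = 1" using u3 by simp
      then show False using vm by simp
    next
      case (Suc n'')
      have odd_B: "odd ((2::int) ^ n - 1)" using n' by simp
      have "ev2 w D 1"
      proof (rule ev2_cancel_odd[OF wD _ _ odd_B])
        show "2 \<le> D" using D4 by simp
        show "1 \<in> Rg w D" using Rg_int[OF wD D0, of 1] by simp
        have "2 * (of_int (2 ^ n - 1) * (w ^ 2 * 1) - 2 * (- (2 ^ n'' * (w ^ 4 + 1)))) = 0"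
          using E2 unfolding n' Suc by (simp add: algebra_simps)
        then have "of_int (2 ^ n - 1) * (w ^ 2 * 1) - 2 * (- (2 ^ n'' * (w ^ 4 + 1))) = 0"
          by (metis mult_eq_0_iff zero_neq_numeral)
        then have "of_int (2 ^ n - 1) * (w ^ 2 * 1) = 2 * (- (2 ^ n'' * (w ^ 4 + 1)))"
          by (simp only: right_minus_eq)
        moreover have "- (2 ^ n'' * (w ^ 4 + 1)) \<in> Rg w D"
          using Rg_uminus Rg_smult[of "w ^ 4 + 1" w D "2 ^ n''"]
            Rg_add[OF RgW[of 4] Rg_int[OF wD D0, of 1]] by simp
        ultimately show "ev2 w D (of_int (2 ^ n - 1) * (w ^ 2 * 1))"
          using ev2_two by metis
      qed
      then show False using ev2_odd[OF wD D0, of 1] by simp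
    qed
  qed
qed

end
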